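(* Let $E$ be an arbitrary set and $\mathcal L\subseteq\{+,-,0\}^E$. Then $\mathcal L$ satisfies the four axioms (C) $\mathcal L\circ\mathcal L\subseteq\mathcal L$; (FS) $\mathcal L\circ(-\mathcal L)\subseteq\mathcal L$; (SE$^=$) for all $X,Y\in\mathcal L$ with $\underline X=\underline Y$ and all $e\in S(X,Y)$, $I^=_e(X,Y;\mathcal L)\neq\emptyset$; (P$^=_{\mathrm{asym}}$) $\mathcal P^=_{\mathrm{asym}}(\mathcal L)\circ\mathcal L\subseteq\mathcal L$, if and only if $\mathcal L$ satisfies the three axioms (FS) $\mathcal L\circ(-\mathcal L)\subseteq\mathcal L$; (SE) for all $X,Y\in\mathcal L$ and all $e\in S(X,Y)$, $I_e(X,Y;\mathcal L)\neq\emptyset$; (P) $\mathcal P(\mathcal L)\circ\mathcal L\subseteq\mathcal L$.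
   Context: A sign vector on a set $E$ is an element of $\{+,-,0\}^E$; $-X$ is defined by $(-X)(e)=-X(e)$. The support of $X$ is $\underline X=\{e\in E: X(e)\neq0\}$. The separator of $X,Y$ is $S(X,Y)=\{e\in E: X(e)\neq0\neq Y(e),\ X(e)\neq Y(e)\}$. The composition $X\circ Y$ is given by $(X\circ Y)(e)=X(e)$ if $X(e)\neq0$ and $(X\circ Y)(e)=Y(e)$ otherwise. The sign vector $X\oplus Y$ is $0$ on $S(X,Y)$ and equals $X\circ Y$ elsewhere. For sets $\mathcal A,\mathcal B$ of sign vectors, $\mathcal A\circ\mathcal B=\{X\circ Y:X\in\mathcal A,Y\in\mathcal B\}$ and $-\mathcal A=\{-X:X\in\mathcal A\}$. For $\mathcal L\subseteq\{+,-,0\}^E$, sign vectors $X,Y$ and $e\in E$ put $I_e(X,Y;\mathcal L)=\{Z\in\mathcal L: Z(e)=0,\ Z(f)=(X\circ Y)(f)\ \forall f\notin S(X,Y)\}$, $I(X,Y;\mathcal L)=\bigcup_{e\in S(X,Y)}I_e(X,Y;\mathcal L)$, $I^=_e(X,Y;\mathcal L)=\{Z\in\mathcal L: Z(e)=0,\ Z(f)=X(f)\ \forall f\notin S(X,Y)\}$, $I^=(X,Y;\mathcal L)=\bigcup_{e\in S(X,Y)}I^=_e(X,Y;\mathcal L)$, $\mathrm{Asym}(\mathcal L)=\{X\in\mathcal L:-X\notin\mathcal L\}$, $\mathcal P^=_{\mathrm{asym}}(\mathcal L)=\{X\oplus(-Y): X,Y\in\mathrm{Asym}(\mathcal L),\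 \underline X=\underline Y,\ I^=(X,-Y;\mathcal L)=I^=(-X,Y;\mathcal L)=\emptyset\}$, $\mathcal P(\mathcal L)=\{X\oplus(-Y): X,Y\in\mathcal L,\ I(X,-Y;\mathcal L)=I(-X,Y;\mathcal L)=\emptyset\}$. *)

theory Defs
  imports Main
begin

datatype sign = Pos | Neg | Zero

type_synonym 'e svec = "'e \<Rightarrow> sign"

fun sneg :: "sign \<Rightarrow> sign" where
  "sneg Pos = Neg" | "sneg Neg = Pos" | "sneg Zero = Zero"

definition vneg :: "'e svec \<Rightarrow> 'e svec" where
  "vneg X = (\<lambda>e. sneg (X e))"

definition supp :: "'e svec \<Rightarrow> 'e set" where
  "supp X = {e. X e \<noteq> Zero}"

definition sep :: "'e svec \<Rightarrow> 'e svec \<Rightarrow> 'e set" where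
  "sep X Y = {e. X e \<noteq> Zero \<and> Y e \<noteq> Zero \<and> X e \<noteq> Y e}"

definition comp :: "'e svec \<Rightarrow> 'e svec \<Rightarrow> 'e svec" where
  "comp X Y = (\<lambda>e. if X e \<noteq> Zero then X e else Y e)"

definition osum :: "'e svec \<Rightarrow> 'e svec \<Rightarrow> 'e svec" where
  "osum X Y = (\<lambda>e. if e \<in> sep X Y then Zero else comp X Y e)"

definition setcomp :: "'e svec set \<Rightarrow> 'e svec set \<Rightarrow> 'e svec set" where
  "setcomp A B = {comp X Y | X Y. X \<in> A \<and> Y \<in> B}"

definition setneg :: "'e svec set \<Rightarrow> 'e svec set" where
  "setneg A = vneg ` A"

definition Ie :: "'e \<Rightarrow> 'e svec \<Rightarrow> 'e svec \<Rightarrow> 'e svec set \<Rightarrow> 'e svec set" where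
  "Ie e X Y L = {Z \<in> L. Z e = Zero \<and> (\<forall>f. f \<notin> sep X Y \<longrightarrow> Z f = comp X Y f)}"

definition I :: "'e svec \<Rightarrow> 'e svec \<Rightarrow> 'e svec set \<Rightarrow> 'e svec set" where
  "I X Y L = (\<Union>e\<in>sep X Y. Ie e X Y L)"

definition Ie_eq :: "'e \<Rightarrow> 'e svec \<Rightarrow> 'e svec \<Rightarrow> 'e svec set \<Rightarrow> 'e svec set" where
  "Ie_eq e X Y L = {Z \<in> L. Z e = Zero \<and> (\<forall>f. f \<notin> sep X Y \<longrightarrow> Z f = X f)}"

definition I_eq :: "'e svec \<Rightarrow> 'e svec \<Rightarrow> 'e svec set \<Rightarrow> 'e svec set" where
  "I_eq X Y L = (\<Union>e\<in>sep X Y. Ie_eq e X Y L)"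

definition Asym :: "'e svec set \<Rightarrow> 'e svec set" where
  "Asym L = {X \<in> L. vneg X \<notin> L}"

definition P_eq_asym :: "'e svec set \<Rightarrow> 'e svec set" where
  "P_eq_asym L = {osum X (vneg Y) | X Y. X \<in> Asym L \<and> Y \<in> Asym L \<and> supp X = supp Y
      \<and> I_eq X (vneg Y) L = {} \<and> I_eq (vneg X) Y L = {}}"

definition P :: "'e svec set \<Rightarrow> 'e svec set" where
  "P L = {osum X (vneg Y) | X Y. X \<in> L \<and> Y \<in> L
      \<and> I X (vneg Y) L = {} \<and> I (vneg X) Y L = {}}"

definition axC :: "'e svec set \<Rightarrow> bool" where
  "axC L \<longleftrightarrow> setcomp L L \<subseteq> L"

definition axFS :: "'e svec set \<Rightarrow> bool" where
  "axFS L \<longleftrightarrow> setcomp L (setneg L) \<subseteq> L"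

definition axSE_eq :: "'e svec set \<Rightarrow> bool" where
  "axSE_eq L \<longleftrightarrow> (\<forall>X\<in>L. \<forall>Y\<in>L. supp X = supp Y \<longrightarrow> (\<forall>e\<in>sep X Y. Ie_eq e X Y L \<noteq> {}))"

definition axP_eq_asym :: "'e svec set \<Rightarrow> bool" where
  "axP_eq_asym L \<longleftrightarrow> setcomp (P_eq_asym L) L \<subseteq> L"

definition axSE :: "'e svec set \<Rightarrow> bool" where
  "axSE L \<longleftrightarrow> (\<forall>X\<in>L. \<forall>Y\<in>L. \<forall>e\<in>sep X Y. Ie e X Y L \<noteq> {})"

definition axP :: "'e svec set \<Rightarrow> bool" where
  "axP L \<longleftrightarrow> setcomp (P L) L \<subseteq> L"

end

theory Submission
  imports Defs
begin

lemma sneg_sneg[simp]: "sneg (sneg a) = a" by (cases a; simp)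
lemma sneg_inj[simp]: "(sneg a = sneg b) = (a = b)" by (cases a; cases b; simp)
lemma sneg_Pos[simp]: "(sneg a = Pos) = (a = Neg)" by (cases a; simp)
lemma sneg_Neg[simp]: "(sneg a = Neg) = (a = Pos)" by (cases a; simp)

lemma vneg_vneg[simp]: "vneg (vneg X) = X"
  unfolding vneg_def by (rule ext) simp

lemma vneg_app: "vneg X e = sneg (X e)" by (simp add: vneg_def)

lemma sneg_zero[simp]: "(sneg a = Zero) = (a = Zero)" by (cases a; simp)

lemma FS_C: "axFS L \<Longrightarrow> axC L"
proof -
  assume fs: "axFS L"
  have cl: "X \<in> L \<Longrightarrow> Y \<in> L \<Longrightarrow> comp X (vneg Y) \<in> L" for X Y
    using fs unfolding axFS_def setcomp_def setneg_def by blast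
  { fix X Y assume "X \<in> L" "Y \<in> L"
    then have "comp X (vneg (comp X (vneg Y))) \<in> L" using cl by blast
    moreover have "comp X (vneg (comp X (vneg Y))) = comp X Y"
      by (rule ext) (auto simp: comp_def vneg_def)
    ultimately have "comp X Y \<in> L" by simp }
  then show ?thesis unfolding axC_def setcomp_def by blast
qed

lemma Ie_Ie_eq: "supp X = supp Y \<Longrightarrow> Ie e X Y L = Ie_eq e X Y L"
  unfolding Ie_def Ie_eq_def
  apply (rule Collect_cong)
  apply (auto simp: supp_def comp_def sep_def set_eq_iff)
  by metis+

lemma I_I_eq: "supp X = supp Y \<Longrightarrow> I X Y L = I_eq X Y L"
  unfolding I_def I_eq_def by (simp add: Ie_Ie_eq)

lemma supp_vneg[simp]: "supp (vneg X) = supp X"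
  by (simp add: supp_def vneg_def)

lemma dir2: "axFS L \<Longrightarrow> axSE L \<Longrightarrow> axP L \<Longrightarrow> axSE_eq L \<and> axP_eq_asym L"
proof
  assume se: "axSE L" and p: "axP L"
  show "axSE_eq L" using se Ie_Ie_eq unfolding axSE_eq_def axSE_def by metis
  have "P_eq_asym L \<subseteq> P L"
  proof
    fix Z assume "Z \<in> P_eq_asym L"
    then obtain X Y where "Z = osum X (vneg Y)" "X \<in> L" "Y \<in> L" "supp X = supp Y"
      "I_eq X (vneg Y) L = {}" "I_eq (vneg X) Y L = {}"
      unfolding P_eq_asym_def Asym_def by blast
    then show "Z \<in> P L" unfolding P_def
      using I_I_eq[of X "vneg Y" L] I_I_eq[of "vneg X" Y L] by auto
  qed
  then show "axP_eq_asym L" using p unfolding axP_eq_asym_def axP_def setcomp_def by blast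
qed

lemma I_cong: "sep X Y = sep X' Y' \<Longrightarrow> comp X Y = comp X' Y' \<Longrightarrow> I X Y L = I X' Y' L"
  unfolding I_def Ie_def by simp

lemma dir1_SE: "axC L \<Longrightarrow> axSE_eq L \<Longrightarrow> axSE L"
  unfolding axSE_def
proof (intro ballI)
  fix X Y e assume c: "axC L" and se: "axSE_eq L" and X: "X \<in> L" and Y: "Y \<in> L" and e: "e \<in> sep X Y"
  have X': "comp X Y \<in> L" and Y': "comp Y X \<in> L" using c X Y unfolding axC_def setcomp_def by blast+
  have s: "supp (comp X Y) = supp (comp Y X)" by (auto simp: supp_def comp_def)
  have sp: "sep (comp X Y) (comp Y X) = sep X Y" by (auto simp: sep_def comp_def)
  have cc: "comp (comp X Y) (comp Y X) = comp X Y" by (rule ext) (auto simp: comp_def)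
  have "Ie_eq e (comp X Y) (comp Y X) L \<noteq> {}" using se X' Y' s sp e unfolding axSE_eq_def by auto
  then show "Ie e X Y L \<noteq> {}" using Ie_Ie_eq[OF s, of e L] unfolding Ie_def
    by (simp add: sp cc)
qed

lemma sep_swap: "sep (vneg X) Y = sep X (vneg Y)"
proof (rule set_eqI)
  fix x show "x \<in> sep (vneg X) Y \<longleftrightarrow> x \<in> sep X (vneg Y)"
    unfolding sep_def vneg_def by (cases "X x"; cases "Y x"; simp)
qed

lemma Ie_sub_I: "e \<in> sep X Y \<Longrightarrow> Ie e X Y L \<subseteq> I X Y L" unfolding I_def by (rule UN_upper)

lemma dir1_P:
  assumes c: "axC L" and fs: "axFS L" and se: "axSE L" and pe: "axP_eq_asym L"
  shows "axP L"
proof -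
  have cl: "X \<in> L \<Longrightarrow> Y \<in> L \<Longrightarrow> comp X (vneg Y) \<in> L" for X Y
    using fs unfolding axFS_def setcomp_def setneg_def by blast
  have cc: "X \<in> L \<Longrightarrow> Y \<in> L \<Longrightarrow> comp X Y \<in> L" for X Y
    using c unfolding axC_def setcomp_def by blast
  have peL: "Z \<in> P_eq_asym L \<Longrightarrow> W \<in> L \<Longrightarrow> comp Z W \<in> L" for Z W
    using pe unfolding axP_eq_asym_def setcomp_def by blast
  have noI: "A \<in> L \<Longrightarrow> B \<in> L \<Longrightarrow> sep A B \<noteq> {} \<Longrightarrow> I A B L \<noteq> {}" for A B
  proof -
    assume a: "A \<in> L" "B \<in> L" "sep A B \<noteq> {}"
    then obtain e where e: "e \<in> sep A B" by blast
    then have "Ie e A B L \<noteq> {}" using se a unfolding axSE_def by blast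
    then show ?thesis using Ie_sub_I[OF e, of L] by blast
  qed
  { fix X Y W assume X: "X \<in> L" and Y: "Y \<in> L" and W: "W \<in> L"
      and I1: "I X (vneg Y) L = {}" and I2: "I (vneg X) Y L = {}"
    have "comp (osum X (vneg Y)) W \<in> L"
    proof (cases "sep X (vneg Y) = {}")
      case True
      then have "osum X (vneg Y) = comp X (vneg Y)" by (simp add: osum_def)
      then show ?thesis using cl cc X Y W by simp
    next
      case False
      define X' where "X' = comp X (vneg Y)"
      define Y' where "Y' = comp Y (vneg X)"
      have X'L: "X' \<in> L" and Y'L: "Y' \<in> L" using cl X Y X'_def Y'_def by auto
      have s: "supp X' = supp Y'" unfolding X'_def Y'_def by (auto simp: supp_def comp_def vneg_def)
      have sp1: "sep X' (vneg Y') = sep X (vneg Y)" unfolding X'_def Y'_def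
        by (auto simp: sep_def comp_def vneg_def)
      have sp2: "sep (vneg X') Y' = sep (vneg X) Y" unfolding X'_def Y'_def
        by (auto simp: sep_def comp_def vneg_def)
      have c1: "comp X' (vneg Y') = comp X (vneg Y)" unfolding X'_def Y'_def
        by (rule ext) (auto simp: comp_def vneg_def)
      have c2: "comp (vneg X') Y' = comp (vneg X) Y" unfolding X'_def Y'_def
        by (rule ext) (auto simp: comp_def vneg_def)
      have o: "osum X' (vneg Y') = osum X (vneg Y)" unfolding osum_def sp1 c1 ..
      have J1: "I X' (vneg Y') L = {}" using I1 I_cong[OF sp1 c1] by simp
      have J2: "I (vneg X') Y' L = {}" using I2 I_cong[OF sp2 c2] by simp
      have sp2': "sep (vneg X) Y = sep X (vneg Y)"
        by (rule sep_swap)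
      have nX: "vneg X' \<notin> L" using noI[OF _ Y'L, of "vneg X'"] J2 sp2 sp2' False by auto
      have nY: "vneg Y' \<notin> L" using noI[OF X'L, of "vneg Y'"] J1 sp1 False by auto
      have "osum X' (vneg Y') \<in> P_eq_asym L"
        unfolding P_eq_asym_def Asym_def
        using X'L Y'L nX nY s J1 J2 I_I_eq[of X' "vneg Y'" L] I_I_eq[of "vneg X'" Y' L] by auto
      then show ?thesis using o peL W by metis
    qed } note main = this
  show ?thesis unfolding axP_def
  proof
    fix V assume "V \<in> setcomp (P L) L"
    then obtain Z W where V: "V = comp Z W" "Z \<in> P L" "W \<in> L" unfolding setcomp_def by blast
    then obtain X Y where h: "Z = osum X (vneg Y)" "X \<in> L" "Y \<in> L"
      "I X (vneg Y) L = {}" "I (vneg X) Y L = {}" unfolding P_def by blast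
    show "V \<in> L" using main[OF h(2,3) V(3) h(4,5)] h(1) V(1) by simp
  qed
qed

theorem proposition2p2:
  fixes L :: "'e svec set"
  shows "(axC L \<and> axFS L \<and> axSE_eq L \<and> axP_eq_asym L) \<longleftrightarrow> (axFS L \<and> axSE L \<and> axP L)"
proof
  assume a: "axC L \<and> axFS L \<and> axSE_eq L \<and> axP_eq_asym L"
  then have "axSE L" using dir1_SE by blast
  then show "axFS L \<and> axSE L \<and> axP L" using a dir1_P by blast
next
  assume a: "axFS L \<and> axSE L \<and> axP L"
  then show "axC L \<and> axFS L \<and> axSE_eq L \<and> axP_eq_asym L" using FS_C dir2 by blast
qed

end
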